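(* Let $k\ge1$ be an integer and $\rho\in(0,1)$. Let $\beta=\frac{1-\sqrt{1-\rho}}{1+\sqrt{1-\rho}}$, $\rho_*=\frac{2\beta^k}{1+\beta^{2k}}$, $\beta_\rho=\frac{\sqrt{1+\rho}-\sqrt{1-\rho}}{\sqrt{1+\rho}+\sqrt{1-\rho}}$, $\rho_1=\frac{2\beta_\rho^k}{1+\beta_\rho^{2k}}$, $$C_*=\frac{\rho_*}{2\rho^k}\Big(\big(2+\rho-2\sqrt{1+\rho}\big)^k+\big(2+\rho+2\sqrt{1+\rho}\big)^k\Big),\qquad C_1=\frac{\rho_1}{2\rho^k}\Big(\big(1-\sqrt{1+\rho^2}\big)^k+\big(1+\sqrt{1+\rho^2}\big)^k\Big).$$ Then $\frac{2+\rho^k}{2-\rho^k}\le C_1$ whenever $k>1$, and $C_1\le C_*$ for all $k\ge1$. *)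

theory Defs
  imports Complex_Main
begin

definition beta_L7 :: "real \<Rightarrow> real" where
  "beta_L7 \<rho> = (1 - sqrt (1 - \<rho>)) / (1 + sqrt (1 - \<rho>))"

definition rho_star :: "nat \<Rightarrow> real \<Rightarrow> real" where
  "rho_star k \<rho> = 2 * beta_L7 \<rho> ^ k / (1 + beta_L7 \<rho> ^ (2 * k))"

definition beta_rho :: "real \<Rightarrow> real" where
  "beta_rho \<rho> = (sqrt (1 + \<rho>) - sqrt (1 - \<rho>)) / (sqrt (1 + \<rho>) + sqrt (1 - \<rho>))"

definition rho_one :: "nat \<Rightarrow> real \<Rightarrow> real" where
  "rho_one k \<rho> = 2 * beta_rho \<rho> ^ k / (1 + beta_rho \<rho> ^ (2 * k))"

definition C_star :: "nat \<Rightarrow> real \<Rightarrow> real" where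
  "C_star k \<rho> = rho_star k \<rho> / (2 * \<rho> ^ k) *
     ((2 + \<rho> - 2 * sqrt (1 + \<rho>)) ^ k + (2 + \<rho> + 2 * sqrt (1 + \<rho>)) ^ k)"

definition C_one :: "nat \<Rightarrow> real \<Rightarrow> real" where
  "C_one k \<rho> = rho_one k \<rho> / (2 * \<rho> ^ k) *
     ((1 - sqrt (1 + \<rho>^2)) ^ k + (1 + sqrt (1 + \<rho>^2)) ^ k)"

end

theory Submission
  imports Defs
begin

lemma pow_add_le:
  fixes x y :: real
  assumes "x \<ge> 0" "y \<ge> 0" "k \<ge> 1"
  shows "x ^ k + y ^ k \<le> (x + y) ^ k"
  using assms(3)
proof (induction k rule: dec_induct)
  case base
  then show ?case by simp
next
  case (step n)
  have "x ^ Suc n + y ^ Suc n = x * x ^ n + y * y ^ n" by simp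
  also have "\<dots> \<le> (x + y) * x ^ n + (x + y) * y ^ n"
    using assms by (intro add_mono mult_right_mono) auto
  also have "\<dots> = (x + y) * (x ^ n + y ^ n)" by (simp add: algebra_simps)
  also have "\<dots> \<le> (x + y) * (x + y) ^ n"
    using step assms by (intro mult_left_mono) auto
  finally show ?case by simp
qed

lemma rho_form:
  fixes y z c :: real
  assumes "y > 0" "z > 0" "c > 0" "y * z = c ^ 2"
  shows "2 * (y / c) / (1 + (y / c) ^ 2) = 2 * c / (y + z)"
proof -
  have "1 + (y / c) ^ 2 = (c^2 + y^2) / c^2" using assms by (simp add: field_simps)
  also have "\<dots> = y * (z + y) / c ^ 2" using assms(4) by (simp add: algebra_simps power2_eq_square)
  finally have e: "1 + (y / c) ^ 2 = y * (z + y) / c ^ 2" .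
  show ?thesis unfolding e using assms by (simp add: field_simps power2_eq_square)
qed

lemma rec_pow:
  fixes a c :: real
  assumes "a^2 = 2*a + c"
  shows "a^(n+2) = 2*a^(n+1) + c*a^n"
proof -
  have "a^(n+2) = a^n * a^2" by (rule power_add)
  also have "\<dots> = a^n * (2*a + c)" using assms by simp
  finally show ?thesis by (simp add: algebra_simps power2_eq_square)
qed

lemma aux_lin:
  fixes a b c :: real
  shows "a \<le> 2 * b \<Longrightarrow> 0 \<le> c \<Longrightarrow> 2 * a + c \<le> 2 * (2 * b + c)"
  by simp

theorem lemma7:
  fixes k :: nat and \<rho> :: real
  assumes "k \<ge> 1" and "0 < \<rho>" and "\<rho> < 1"
  shows "(k > 1 \<longrightarrow> (2 + \<rho> ^ k) / (2 - \<rho> ^ k) \<le> C_one k \<rho>)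
         \<and> C_one k \<rho> \<le> C_star k \<rho>"
proof -
  define t where "t = sqrt (1 + \<rho>)"
  define s where "s = sqrt (1 - \<rho>)"
  define u where "u = sqrt (1 + \<rho>^2)"
  define w where "w = sqrt (1 - \<rho>^2)"
  have r0: "\<rho> > 0" "\<rho> < 1" using assms by auto
  have t2: "t^2 = 1 + \<rho>" and t1: "t \<ge> 1" and t0: "t > 0" using r0 by (auto simp: t_def)
  have s2: "s^2 = 1 - \<rho>" and s0: "s \<ge> 0" and s1: "s < 1" using r0 by (auto simp: s_def)
  have u2: "u^2 = 1 + \<rho>^2" and u1: "u \<ge> 1" using r0 by (auto simp: u_def)
  have rr: "\<rho>^2 < 1" using r0 by (simp add: power_less_one_iff)
  have w2: "w^2 = 1 - \<rho>^2" and w0: "w \<ge> 0" using rr by (auto simp: w_def)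
  have w1: "w < 1" using r0 unfolding w_def by simp
  have ts: "t * s = w" unfolding t_def s_def w_def
    by (simp add: real_sqrt_mult[symmetric] algebra_simps power2_eq_square)
  define P where "P = (\<lambda>n. (1 + u) ^ n + (1 - u) ^ n)"
  define Q where "Q = (\<lambda>n. (1 + w) ^ n + (1 - w) ^ n)"
  define A1 where "A1 = (1 + s)^2"
  define A2 where "A2 = (1 - s)^2"
  define Ss where "Ss = A1 ^ k + A2 ^ k"
  define Rs where "Rs = ((t - 1)^2) ^ k + ((t + 1)^2) ^ k"
  have Qpos: "Q n > 0" for n unfolding Q_def using w0 w1
    by (intro add_pos_nonneg) auto
  have Ppos: "P n \<ge> 0" for n
  proof -
    have "\<bar>(1 - u) ^ n\<bar> \<le> (1 + u) ^ n"
      unfolding power_abs using u1 by (intro power_mono) auto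
    then show ?thesis unfolding P_def by linarith
  qed
  have br: "beta_rho \<rho> = (1 - w) / \<rho>"
  proof -
    define a where "a = sqrt (1 + \<rho>)"
    define b where "b = sqrt (1 - \<rho>)"
    have a2: "a^2 = 1 + \<rho>" and b2: "b^2 = 1 - \<rho>" and a1: "a \<ge> 1" and b0: "b \<ge> 0"
      using r0 by (auto simp: a_def b_def)
    have ab: "a * b = w" using ts by (simp add: a_def b_def t_def s_def)
    have "(a - b) * \<rho> = (1 - w) * (a + b)"
      using a2 b2 ab by algebra
    moreover have "a + b > 0" using a1 b0 by simp
    ultimately show ?thesis unfolding beta_rho_def a_def[symmetric] b_def[symmetric]
      using r0 by (simp add: field_simps)
  qed
  have yz1: "(1 - w) ^ k * (1 + w) ^ k = (\<rho> ^ k) ^ 2"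
  proof -
    have "(1 - w) * (1 + w) = \<rho>^2" using w2 by (simp add: algebra_simps power2_eq_square)
    then show ?thesis by (metis power_mult_distrib power_mult mult.commute)
  qed
  have rho1: "rho_one k \<rho> = 2 * \<rho> ^ k / Q k"
  proof -
    have "rho_one k \<rho> = 2 * ((1 - w) ^ k / \<rho> ^ k) / (1 + ((1 - w) ^ k / \<rho> ^ k) ^ 2)"
      unfolding rho_one_def br by (simp add: power_divide power_mult[symmetric] mult.commute)
    also have "\<dots> = 2 * \<rho> ^ k / ((1 - w) ^ k + (1 + w) ^ k)"
      using yz1 r0 w1 w0 by (intro rho_form) auto
    finally show ?thesis by (simp add: Q_def add.commute)
  qed
  have Cone: "C_one k \<rho> = P k / Q k"
    unfolding C_one_def rho1 u_def[symmetric] P_def using r0 Qpos[of k]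
    by (simp add: field_simps add.commute)
  have bL: "beta_L7 \<rho> = A2 / \<rho>"
  proof -
    have "(1 - s) * (1 + s) = \<rho>" using s2 by (simp add: algebra_simps power2_eq_square)
    then show ?thesis unfolding beta_L7_def s_def[symmetric] A2_def using s0 r0
      apply (simp add: field_simps power2_eq_square)
      using s2 by algebra
  qed
  have A1p: "A1 > 0" and A2p: "A2 > 0" using s0 s1 by (auto simp: A1_def A2_def)
  have yz2: "A2 ^ k * A1 ^ k = (\<rho> ^ k) ^ 2"
  proof -
    have "(1 - s) * (1 + s) = \<rho>" using s2 by (simp add: algebra_simps power2_eq_square)
    then have "A2 * A1 = \<rho>^2" unfolding A1_def A2_def by (metis power_mult_distrib)
    then show ?thesis by (metis power_mult_distrib power_mult mult.commute)
  qed
  have rhos: "rho_star k \<rho> = 2 * \<rho> ^ k / Ss"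
  proof -
    have "rho_star k \<rho> = 2 * (A2 ^ k / \<rho> ^ k) / (1 + (A2 ^ k / \<rho> ^ k) ^ 2)"
      unfolding rho_star_def bL by (simp add: power_divide power_mult[symmetric] mult.commute)
    also have "\<dots> = 2 * \<rho> ^ k / (A2 ^ k + A1 ^ k)"
      using yz2 r0 A1p A2p by (intro rho_form) auto
    finally show ?thesis by (simp add: Ss_def add.commute)
  qed
  have Ssp: "Ss > 0" unfolding Ss_def using A1p A2p by (simp add: add_pos_pos)
  have e1: "2 + \<rho> - 2 * sqrt (1 + \<rho>) = (t - 1)^2"
    using t2 by (simp add: t_def[symmetric] power2_eq_square algebra_simps)
  have e2: "2 + \<rho> + 2 * sqrt (1 + \<rho>) = (t + 1)^2"
    using t2 by (simp add: t_def[symmetric] power2_eq_square algebra_simps)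
  have Cstar: "C_star k \<rho> = Rs / Ss"
    unfolding C_star_def rhos e1 e2 Rs_def using r0 Ssp
    by (simp add: field_simps)
  have p4: "0 \<le> \<rho> * (\<rho> * (\<rho> * \<rho>))" using r0 by simp
  have ub: "u \<le> 1 + \<rho>^2 / 2"
    by (rule power2_le_imp_le) (use u2 p4 in \<open>auto simp: power2_eq_square algebra_simps\<close>)
  have wb: "1 - \<rho>^2 \<le> w"
  proof (rule power2_le_imp_le)
    have "0 \<le> 1 - \<rho>^2" "1 - \<rho>^2 \<le> 1" using rr by auto
    then have "(1 - \<rho>^2) * (1 - \<rho>^2) \<le> 1 * (1 - \<rho>^2)" by (intro mult_right_mono) auto
    then show "(1 - \<rho>^2)^2 \<le> w^2" using w2 by (simp add: power2_eq_square)
  qed (use w0 in auto)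
  have tb: "1 + \<rho>/2 - \<rho>^2/8 \<le> t"
  proof (rule power2_le_imp_le)
    have "\<rho>^4 / 64 \<le> \<rho>^3 / 8"
    proof -
      have "\<rho> * \<rho>^3 \<le> 8 * \<rho>^3" using r0 by (intro mult_right_mono) auto
      then show ?thesis by (simp add: power_numeral_reduce)
    qed
    moreover have "(1 + \<rho>/2 - \<rho>^2/8)^2 = 1 + \<rho> - \<rho>^3/8 + \<rho>^4/64"
      by (simp add: power2_eq_square power_numeral_reduce algebra_simps)
    ultimately show "(1 + \<rho>/2 - \<rho>^2/8)^2 \<le> t^2" using t2 by simp
  qed (use t0 in auto)
  have sb: "s \<le> 1 - \<rho>/2 - \<rho>^2/8"
  proof (rule power2_le_imp_le)
    have "(1 - \<rho>/2 - \<rho>^2/8)^2 = 1 - \<rho> + \<rho>^3/8 + \<rho>^4/64"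
      by (simp add: power2_eq_square power_numeral_reduce algebra_simps)
    moreover have "0 \<le> \<rho>^3" "0 \<le> \<rho>^4" using r0 by auto
    ultimately show "s^2 \<le> (1 - \<rho>/2 - \<rho>^2/8)^2" using s2 by simp
    have "\<rho>^2 \<le> 1" using rr by simp
    then show "0 \<le> 1 - \<rho>/2 - \<rho>^2/8" using r0 by simp
  qed
  have ineq1: "2 * u * A1 \<le> (t + 1)^2 * (1 + w)"
  proof (cases "\<rho> \<le> 9/10")
    case True
    have rle: "\<rho>^2 \<le> 1" using rr by simp
    have "2 * u * A1 \<le> (2 + \<rho>^2) * (2 - \<rho>/2 - \<rho>^2/8)^2"
    proof -
      have "A1 \<le> (2 - \<rho>/2 - \<rho>^2/8)^2" unfolding A1_def
        using sb s0 by (intro power_mono) auto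
      moreover have "2 * u \<le> 2 + \<rho>^2" using ub by simp
      ultimately show ?thesis using A1p u1
        by (intro mult_mono) auto
    qed
    also have "\<dots> \<le> (2 + \<rho>/2 - \<rho>^2/8)^2 * (2 - \<rho>^2)"
    proof -
      have e: "(2 + \<rho>/2 - \<rho>^2/8)^2 * (2 - \<rho>^2) - (2 + \<rho>^2) * (2 - \<rho>/2 - \<rho>^2/8)^2
              = 8 * (\<rho> * (1 - \<rho>)) - \<rho>^3 * (1 - \<rho>) / 2 - \<rho>^6 / 32"
        by (simp add: power2_eq_square power_numeral_reduce field_simps)
      have a1: "\<rho>^3 * (1 - \<rho>) \<le> \<rho> * (1 - \<rho>)"
      proof -
        have "\<rho> * \<rho>^2 \<le> \<rho> * 1" using rle r0 by (intro mult_left_mono) auto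
        then have "\<rho>^3 \<le> \<rho>" by (simp add: power_numeral_reduce)
        then show ?thesis using r0 by (intro mult_right_mono) auto
      qed
      have a2: "\<rho>^6 \<le> \<rho>"
      proof -
        have "\<rho>^5 \<le> 1" using r0 by (simp add: power_le_one)
        then have "\<rho> * \<rho>^5 \<le> \<rho> * 1" using r0 by (intro mult_left_mono) auto
        then show ?thesis by (simp add: power_numeral_reduce)
      qed
      have a3: "\<rho> * (1 - \<rho>) \<ge> \<rho> / 10"
      proof -
        have "0 \<le> \<rho> * (9/10 - \<rho>)" using True r0 by (intro mult_nonneg_nonneg) auto
        then show ?thesis by (simp add: algebra_simps)
      qed
      show ?thesis using e a1 a2 a3 r0 by linarith
    qed
    also have "\<dots> \<le> (t + 1)^2 * (1 + w)"
    proof (intro mult_mono)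
      show "(2 + \<rho>/2 - \<rho>^2/8)^2 \<le> (t + 1)^2"
        using tb rle r0 by (intro power_mono) auto
      show "2 - \<rho>^2 \<le> 1 + w" using wb by simp
    qed (use w0 rle in auto)
    finally show ?thesis .
  next
    case False
    have "s^2 \<le> (32/100)^2" using s2 False by (simp add: power2_eq_square)
    then have s32: "s \<le> 32/100" by (rule power2_le_imp_le) simp
    have "(137/100)^2 \<le> t^2" using t2 False by (simp add: power2_eq_square)
    then have t137: "137/100 \<le> t" by (rule power2_le_imp_le) (use t0 in simp)
    have "u^2 \<le> (142/100)^2" using u2 rr by (simp add: power2_eq_square)
    then have u142: "u \<le> 142/100" by (rule power2_le_imp_le) simp
    have "2 * u * A1 \<le> 2 * (142/100) * (132/100)^2" unfolding A1_def
      using u142 s32 s0 u1 by (intro mult_mono power_mono) auto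
    also have "\<dots> \<le> (237/100)^2 * 1" by (simp add: power2_eq_square)
    also have "\<dots> \<le> (t + 1)^2 * (1 + w)"
      using t137 w0 by (intro mult_mono power_mono) auto
    finally show ?thesis .
  qed
  have ineq2: "2 * u * A2 \<le> (t + 1)^2 * (1 - w)"
  proof -
    have key: "2 * u * (1 + w) \<le> (t + 1)^2 * A1"
    proof -
      have "2 + w \<le> (t + 1) * (1 + s)" using ts t1 s0 by (simp add: algebra_simps)
      then have "(2 + w)^2 \<le> ((t + 1) * (1 + s))^2" using w0 by (intro power_mono) auto
      moreover have "2 * u * (1 + w) \<le> 3 * (1 + w)" using ub rr w0 by (intro mult_right_mono) auto
      moreover have "3 * (1 + w) \<le> (2 + w)^2" using w0 by (simp add: power2_eq_square algebra_simps)
      ultimately show ?thesis unfolding A1_def by (simp add: power_mult_distrib)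
    qed
    have ew: "(1 - w) * (1 + w) = \<rho>^2" using w2 by (simp add: algebra_simps power2_eq_square)
    have es: "A2 * A1 = \<rho>^2"
    proof -
      have "(1 - s) * (1 + s) = \<rho>" using s2 by (simp add: algebra_simps power2_eq_square)
      then show ?thesis unfolding A1_def A2_def by (metis power_mult_distrib)
    qed
    have "(2 * u * A2) * ((1 + w) * A1) = (2 * u * (1 + w)) * \<rho>^2"
      unfolding es[symmetric] by (simp only: ac_simps)
    also have "\<dots> \<le> ((t + 1)^2 * A1) * \<rho>^2" using key by (intro mult_right_mono) auto
    also have "\<dots> = ((t + 1)^2 * (1 - w)) * ((1 + w) * A1)"
      unfolding ew[symmetric] by (simp only: ac_simps)
    finally show ?thesis using w0 A1p
      by (simp add: mult_le_cancel_right zero_less_mult_iff add_pos_nonneg)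
  qed
  have part2: "P k * Ss \<le> Rs * Q k"
  proof -
    have "P k \<le> (1 + u) ^ k + (u - 1) ^ k"
    proof -
      have "(1 - u) ^ k \<le> \<bar>1 - u\<bar> ^ k" by (metis power_abs abs_ge_self)
      also have "\<bar>1 - u\<bar> = u - 1" using u1 by simp
      finally show ?thesis unfolding P_def by simp
    qed
    then have "P k * Ss \<le> ((1 + u) ^ k + (u - 1) ^ k) * Ss"
      using Ssp by (intro mult_right_mono) auto
    also have "\<dots> = (((1 + u) * A1) ^ k + ((u - 1) * A1) ^ k)
                  + (((1 + u) * A2) ^ k + ((u - 1) * A2) ^ k)"
      unfolding Ss_def power_mult_distrib by (simp add: distrib_left distrib_right ac_simps)
    also have "\<dots> \<le> ((1 + u) * A1 + (u - 1) * A1) ^ k + ((1 + u) * A2 + (u - 1) * A2) ^ k"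
      using u1 A1p A2p assms(1) by (intro add_mono pow_add_le) auto
    also have "\<dots> = (2 * u * A1) ^ k + (2 * u * A2) ^ k" by (simp add: algebra_simps)
    also have "\<dots> \<le> ((t + 1)^2 * (1 + w)) ^ k + ((t + 1)^2 * (1 - w)) ^ k"
      using ineq1 ineq2 u1 A1p A2p by (intro add_mono power_mono) auto
    also have "\<dots> = ((t + 1)^2) ^ k * Q k" unfolding Q_def power_mult_distrib by (simp add: distrib_left distrib_right ac_simps)
    also have "\<dots> \<le> Rs * Q k" unfolding Rs_def using Qpos[of k]
      by (intro mult_right_mono) (auto simp: power_mult[symmetric])
    finally show ?thesis .
  qed
  have C2: "C_one k \<rho> \<le> C_star k \<rho>"
    unfolding Cone Cstar using part2 Qpos[of k] Ssp by (simp add: divide_simps)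
  have Prec: "P (n + 2) = 2 * P (n + 1) + \<rho>^2 * P n" for n
  proof -
    have h1: "(1 + u)^2 = 2 * (1 + u) + \<rho>^2" and h2: "(1 - u)^2 = 2 * (1 - u) + \<rho>^2"
      using u2 by (auto simp: power2_eq_square algebra_simps)
    have "(1 + u)^(n+2) = 2 * (1 + u)^(n+1) + \<rho>^2 * (1 + u)^n" by (rule rec_pow[OF h1])
    moreover have "(1 - u)^(n+2) = 2 * (1 - u)^(n+1) + \<rho>^2 * (1 - u)^n" by (rule rec_pow[OF h2])
    ultimately
    show ?thesis unfolding P_def by (simp add: algebra_simps)
  qed
  have Qrec: "Q (n + 2) = 2 * Q (n + 1) - \<rho>^2 * Q n" for n
  proof -
    have h1: "(1 + w)^2 = 2 * (1 + w) + (-(\<rho>^2))" and h2: "(1 - w)^2 = 2 * (1 - w) + (-(\<rho>^2))"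
      using w2 by (auto simp: power2_eq_square algebra_simps)
    have "(1 + w)^(n+2) = 2 * (1 + w)^(n+1) + (-(\<rho>^2)) * (1 + w)^n" by (rule rec_pow[OF h1])
    moreover have "(1 - w)^(n+2) = 2 * (1 - w)^(n+1) + (-(\<rho>^2)) * (1 - w)^n" by (rule rec_pow[OF h2])
    ultimately
    show ?thesis unfolding Q_def by (simp add: algebra_simps)
  qed
  have main: "\<rho> ^ (m + 2) * (P (m + 2) + Q (m + 2)) \<le> 2 * (P (m + 2) - Q (m + 2))" for m
  proof (induction m)
    case 0
    have "P 2 = 4 + 2 * \<rho>^2" "Q 2 = 4 - 2 * \<rho>^2"
      unfolding P_def Q_def using u2 w2 by (auto simp: power2_eq_square algebra_simps)
    then show ?case by (simp add: numeral_2_eq_2 power2_eq_square algebra_simps)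
  next
    case (Suc m)
    define S where "S = (\<lambda>n. P n + Q n)"
    define D where "D = (\<lambda>n. P n - Q n)"
    have SS: "S (m + 3) = 2 * S (m + 2) + \<rho>^2 * D (m + 1)"
      using Prec[of "m+1"] Qrec[of "m+1"] by (simp add: S_def D_def algebra_simps numeral_eq_Suc)
    have DD: "D (m + 3) = 2 * D (m + 2) + \<rho>^2 * S (m + 1)"
      using Prec[of "m+1"] Qrec[of "m+1"] by (simp add: S_def D_def algebra_simps numeral_eq_Suc)
    have IH: "\<rho> ^ (m + 2) * S (m + 2) \<le> 2 * D (m + 2)" using Suc by (simp add: S_def D_def)
    have S0: "S n \<ge> 0" for n using Ppos[of n] Qpos[of n] by (simp add: S_def)
    have SD: "D n \<le> S n" for n using Qpos[of n] by (simp add: S_def D_def)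
    have p1: "\<rho> ^ (m + 3) \<le> \<rho> ^ (m + 2)" using r0 by (intro power_decreasing) auto
    have p2: "\<rho> ^ (m + 3) \<le> 1" using r0 by (simp add: power_le_one)
    have p0: "\<rho> ^ (m + 3) \<ge> 0" using r0 by simp
    have "\<rho> ^ (m + 3) * S (m + 3) = 2 * (\<rho> ^ (m + 3) * S (m + 2)) + \<rho>^2 * (\<rho> ^ (m + 3) * D (m + 1))"
      unfolding SS by (simp add: algebra_simps)
    also have "\<dots> \<le> 2 * (\<rho> ^ (m + 2) * S (m + 2)) + \<rho>^2 * (1 * S (m + 1))"
    proof (intro add_mono mult_left_mono)
      show "\<rho> ^ (m + 3) * S (m + 2) \<le> \<rho> ^ (m + 2) * S (m + 2)"
        using p1 S0 by (intro mult_right_mono) auto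
      have "\<rho> ^ (m + 3) * D (m + 1) \<le> \<rho> ^ (m + 3) * S (m + 1)"
        using p0 SD by (intro mult_left_mono) auto
      also have "\<dots> \<le> 1 * S (m + 1)" using p2 S0 by (intro mult_right_mono) auto
      finally show "\<rho> ^ (m + 3) * D (m + 1) \<le> 1 * S (m + 1)" .
    qed auto
    also have "\<dots> \<le> 2 * D (m + 3)"
    proof -
      have X: "0 \<le> \<rho>^2 * S (m+1)" using S0[of "m+1"] by simp
      show ?thesis unfolding DD apply (simp only: mult_1)
        using aux_lin[OF IH X] .
    qed
    finally show ?case by (simp add: S_def D_def numeral_eq_Suc)
  qed
  have C1: "k > 1 \<longrightarrow> (2 + \<rho> ^ k) / (2 - \<rho> ^ k) \<le> C_one k \<rho>"
  proof
    assume "k > 1"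
    then obtain m where km: "k = m + 2" by (metis add.commute less_imp_Suc_add one_add_one add_Suc_shift plus_1_eq_Suc)
    have rk: "\<rho> ^ k < 1" using r0 assms(1) by (simp add: power_less_one_iff)
    have "(2 + \<rho> ^ k) * Q k \<le> P k * (2 - \<rho> ^ k)"
      using main[of m] unfolding km[symmetric] by (simp add: algebra_simps)
    then show "(2 + \<rho> ^ k) / (2 - \<rho> ^ k) \<le> C_one k \<rho>"
      unfolding Cone using rk Qpos[of k] by (simp add: divide_simps)
  qed
  show ?thesis using C1 C2 by blast
qed

end
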